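(* Let $N_x, N_\omega \ge 1$, $\Delta t>0$, $T = N_\omega \Delta t$, $t_j = j\Delta t$ for $j=0,\dots,N_\omega-1$, and for $k = 0,\dots,N_\omega-1$ let $\omega_k = 2\pi\big(k - N_\omega\,\Theta(k - N_\omega/2)\big)/T$, where $\Theta(s)=0$ if $s<0$ and $\Theta(s)=1$ if $s\ge 0$. Let $A\in\mathbb{C}^{N_x\times N_x}$, $q_0\in\mathbb{C}^{N_x}$, and $\hat g_0,\dots,\hat g_{N_\omega-1}\in\mathbb{C}^{N_x}$, and set $$g(t) = \frac{1}{N_\omega}\sum_{l=0}^{N_\omega-1}\hat g_l\, e^{i\omega_l t}.$$ Let $q:[0,T]\to\mathbb{C}^{N_x}$ be the solution of $\dot q = Aq + g(t)$, $q(0)=q_0$, i.e. $q(t) = e^{At}q_0 + \int_0^t e^{A(t-t')}g(t')\,dt'$. Assume that $i\omega_l I - A$ is invertible for every $l\in\{0,\dots,N_\omega-1\}$, and write $R_l = (i\omega_l I - A)^{-1}$. Fix $k\in\{0,\dots,N_\omega-1\}$ and assume that $I - e^{(A - i\omega_k I)\Delta t}$ is invertible. Then $$\hat q_k := \sum_{j=0}^{N_\omega-1} q(t_j)\,e^{-i\omega_k t_j} = R_k\hat g_k + \big(I - e^{(A - i\omega_k I)\Delta t}\big)^{-1}\big(I - e^{AT}\big)\Big(q_0 - \frac{1}{N_\omega}\sum_{l=0}^{N_\omega-1}R_l\hat g_l\Big).$$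
   Context: $I$ denotes the $N_x\times N_x$ identity matrix and $e^{M}$ the matrix exponential. Note that $\omega_k T\in 2\pi\mathbb{Z}$ for all $k$. The quantity $\hat q_k$ is the $k$-th component of the discrete Fourier transform (without normalization) of the samples $q(t_0),\dots,q(t_{N_\omega-1})$; with this convention $\hat g_l$ is the $l$-th DFT component of the samples of $g$. (In the paper this is applied with $g(t) = Bf(t) + n(q(t))$, the sum of an external forcing and a nonlinear term, both assumed to be exactly of this finite Fourier form.) *)

theory Defs
  imports "HOL-Analysis.Analysis"
begin

definition Theta :: "real \<Rightarrow> real" where
  "Theta s = (if s < 0 then 0 else 1)"

definition omega :: "nat \<Rightarrow> real \<Rightarrow> nat \<Rightarrow> real" where
  "omega N T k = 2 * pi * (real k - real N * Theta (real k - real N / 2)) / T"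

definition matpow :: "complex^'n^'n \<Rightarrow> nat \<Rightarrow> complex^'n^'n" where
  "matpow M k = (((**) M) ^^ k) (mat 1)"

definition mexp :: "complex^'n^'n \<Rightarrow> complex^'n^'n" where
  "mexp M = (\<Sum>k. (1 / fact k) *\<^sub>R matpow M k)"

end

theory Submission
  imports Defs
begin


typedef (overloaded) 'n cendo = "UNIV :: ((complex^'n::finite) \<Rightarrow>\<^sub>L (complex^'n)) set" morphisms rep_ce Abs_ce by simp
setup_lifting type_definition_cendo

instantiation cendo :: (finite) real_normed_algebra_1
begin
lift_definition norm_cendo :: "'a cendo \<Rightarrow> real" is norm .
lift_definition minus_cendo :: "'a cendo \<Rightarrow> 'a cendo \<Rightarrow> 'a cendo" is "(-)" .
lift_definition plus_cendo :: "'a cendo \<Rightarrow> 'a cendo \<Rightarrow> 'a cendo" is "(+)" .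
lift_definition uminus_cendo :: "'a cendo \<Rightarrow> 'a cendo" is "uminus" .
lift_definition zero_cendo :: "'a cendo" is "0" .
lift_definition one_cendo :: "'a cendo" is "id_blinfun" .
lift_definition times_cendo :: "'a cendo \<Rightarrow> 'a cendo \<Rightarrow> 'a cendo" is "(o\<^sub>L)" .
lift_definition scaleR_cendo :: "real \<Rightarrow> 'a cendo \<Rightarrow> 'a cendo" is "scaleR" .
definition dist_cendo :: "'a cendo \<Rightarrow> 'a cendo \<Rightarrow> real"
  where "dist_cendo a b = norm (a - b)"
definition uniformity_cendo :: "('a cendo \<times> 'a cendo) filter" where
  "uniformity_cendo = (INF e\<in>{0 <..}. principal {(x, y). dist x y < e})"
definition open_cendo :: "'a cendo set \<Rightarrow> bool"
  where "open_cendo S = (\<forall>x\<in>S. \<forall>\<^sub>F (x', y) in uniformity. x' = x \<longrightarrow> y \<in> S)"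
definition sgn_cendo :: "'a cendo \<Rightarrow> 'a cendo"
  where "sgn_cendo x = scaleR (inverse (norm x)) x"
instance
proof
  fix x y z :: "'a cendo" and a b::real
  show "(norm x = 0) = (x = 0)" by transfer simp
  show "norm (x + y) \<le> norm x + norm y" by transfer (rule norm_triangle_ineq)
  show "norm (a *\<^sub>R x) = \<bar>a\<bar> * norm x" by transfer simp
  show "norm (x * y) \<le> norm x * norm y" by transfer (rule norm_blinfun_compose)
  show "norm (1::'a cendo) = 1" by transfer simp
  show "x * y * z = x * (y * z)" by transfer (auto intro!: blinfun_eqI)
  show "1 * x = x" by transfer (auto intro!: blinfun_eqI)
  show "x * 1 = x" by transfer (auto intro!: blinfun_eqI)
  show "(x + y) * z = x * z + y * z" by transfer (auto intro!: blinfun_eqI simp: blinfun.bilinear_simps)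
  show "x * (y + z) = x * y + x * z" by transfer (auto intro!: blinfun_eqI simp: blinfun.bilinear_simps)
  have n1: "norm (id_blinfun::((complex^'a) \<Rightarrow>\<^sub>L (complex^'a))) = 1" by simp
  show "(0::'a cendo) \<noteq> 1" 
    apply transfer using n1 by (metis norm_zero zero_neq_one)
  show "a *\<^sub>R x * y = a *\<^sub>R (x * y)" by transfer (auto intro!: blinfun_eqI simp: blinfun.bilinear_simps)
  show "x * a *\<^sub>R y = a *\<^sub>R (x * y)" by transfer (auto intro!: blinfun_eqI simp: blinfun.bilinear_simps)
  show "x + y = y + x" by transfer (rule add.commute)
  show "0 + x = x" by transfer simp
  show "- x + x = 0" by transfer simp
  show "x - y = x + - y" by transfer simp
  show "a *\<^sub>R (x + y) = a *\<^sub>R x + a *\<^sub>R y" by transfer (rule scaleR_add_right)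
  show "(a + b) *\<^sub>R x = a *\<^sub>R x + b *\<^sub>R x" by transfer (rule scaleR_add_left)
  show "a *\<^sub>R b *\<^sub>R x = (a * b) *\<^sub>R x" by transfer simp
  show "1 *\<^sub>R x = x" by transfer simp
qed (unfold dist_cendo_def open_cendo_def sgn_cendo_def uniformity_cendo_def, 
     (transfer, (auto simp: algebra_simps blinfun.bilinear_simps scaleR_add_right scaleR_add_left intro!: blinfun_eqI))?)+
end


instance cendo :: (finite) banach
proof
  fix X :: "nat \<Rightarrow> 'a cendo" assume X: "Cauchy X"
  have d: "dist x y = dist (rep_ce x) (rep_ce y)" for x y :: "'a cendo"
    unfolding dist_cendo_def dist_norm by transfer simp
  have "Cauchy (\<lambda>n. rep_ce (X n))" using X unfolding Cauchy_def d .
  then obtain L where L: "(\<lambda>n. rep_ce (X n)) \<longlonglongrightarrow> L"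
    using Cauchy_convergent_iff convergent_def by blast
  have "X \<longlonglongrightarrow> Abs_ce L" unfolding tendsto_iff d using L[unfolded tendsto_iff]
    by (simp add: Abs_ce_inverse)
  thus "convergent X" unfolding convergent_def by blast
qed

lemma rep_ce_bl: "bounded_linear (rep_ce :: 'n::finite cendo \<Rightarrow> _)"
  by (rule bounded_linear_intro[where K=1]; transfer; simp)

lemma rep_ce_apply_bl: "bounded_linear (\<lambda>F::'n::finite cendo. blinfun_apply (rep_ce F) v)"
  by (rule bounded_linear_compose[OF blinfun.bounded_linear_left rep_ce_bl])

definition Phi :: "complex^'n^'n \<Rightarrow> 'n::finite cendo" where
  "Phi M = Abs_ce (Blinfun (\<lambda>v. M *v v))"

lemma Phi_apply[simp]: "blinfun_apply (rep_ce (Phi M)) v = M *v v"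
  by (simp add: Phi_def Abs_ce_inverse bounded_linear_Blinfun_apply)

lemma ce_eqI: "(\<And>v. blinfun_apply (rep_ce F) v = blinfun_apply (rep_ce G) v) \<Longrightarrow> F = G"
  by (metis blinfun_eqI rep_ce_inject)

lemma Phi_inj: "Phi M = Phi N \<Longrightarrow> M = N"
proof -
  assume "Phi M = Phi N"
  hence "M *v v = N *v v" for v using Phi_apply by metis
  thus "M = N" by (simp add: matrix_eq)
qed

lemma Phi_mult: "Phi (M ** N) = Phi M * Phi N"
  by (rule ce_eqI) (simp add: times_cendo.rep_eq matrix_vector_mul_assoc)

lemma Phi_one: "Phi (mat 1) = 1"
  by (rule ce_eqI) (simp add: one_cendo.rep_eq)

lemma mv_scaleR: "(r *\<^sub>R X) *v v = r *\<^sub>R (X *v v)" for X :: "complex^'n^'n"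
  by (simp add: vec_eq_iff matrix_vector_mult_def scaleR_sum_right)

lemma Phi_scaleR: "Phi (r *\<^sub>R X) = r *\<^sub>R Phi X"
  by (rule ce_eqI) (simp add: scaleR_cendo.rep_eq mv_scaleR blinfun.bilinear_simps)

lemma Phi_add: "Phi (X + Y) = Phi X + Phi Y"
  by (rule ce_eqI) (simp add: plus_cendo.rep_eq matrix_vector_mult_add_rdistrib blinfun.bilinear_simps)

lemma Phi_diff: "Phi (X - Y) = Phi X - Phi Y"
  by (rule ce_eqI) (simp add: minus_cendo.rep_eq matrix_vector_mult_diff_rdistrib blinfun.bilinear_simps)

lemma Phi_zero: "Phi 0 = 0"
  by (rule ce_eqI) (simp add: zero_cendo.rep_eq)

lemma Phi_sum: "Phi (\<Sum>i\<in>S. f i) = (\<Sum>i\<in>S. Phi (f i))"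
  by (induct S rule: infinite_finite_induct) (simp_all add: Phi_zero Phi_add)

lemma Phi_matpow: "Phi (matpow M k) = Phi M ^ k"
  by (induct k) (simp_all add: matpow_def Phi_mult Phi_one)

lemma mv_bl: "bounded_linear (\<lambda>X::complex^'n::finite^'n. X *v v)"
  by (simp add: linear_conv_bounded_linear[symmetric] linear_iff matrix_vector_mult_add_rdistrib mv_scaleR)

definition Psi :: "'n::finite cendo \<Rightarrow> complex^'n^'n" where
  "Psi F = (\<chi> i j. (blinfun_apply (rep_ce F) (axis j 1)) $ i)"

lemma Psi_Phi: "Psi (Phi M) = M"
  by (simp add: Psi_def vec_eq_iff matrix_vector_mult_def axis_def if_distrib cong: if_cong)

lemma Psi_tendsto: assumes "(f \<longlongrightarrow> L) F" shows "((\<lambda>x. Psi (f x)) \<longlongrightarrow> Psi L) F"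
proof -
  have j: "((\<lambda>x. blinfun_apply (rep_ce (f x)) (axis j 1)) \<longlongrightarrow> blinfun_apply (rep_ce L) (axis j 1)) F" for j
    by (rule bounded_linear.tendsto[OF rep_ce_apply_bl assms])
  have "((\<lambda>x. blinfun_apply (rep_ce (f x)) (axis j 1) $ i) \<longlongrightarrow> blinfun_apply (rep_ce L) (axis j 1) $ i) F" for i j
    by (rule tendsto_vec_nth[OF j])
  hence "((\<lambda>x. \<chi> j. blinfun_apply (rep_ce (f x)) (axis j 1) $ i) \<longlongrightarrow> (\<chi> j. blinfun_apply (rep_ce L) (axis j 1) $ i)) F" for i
    by (rule tendsto_vec_lambda)
  hence "((\<lambda>x. \<chi> i j. blinfun_apply (rep_ce (f x)) (axis j 1) $ i) \<longlongrightarrow> (\<chi> i j. blinfun_apply (rep_ce L) (axis j 1) $ i)) F"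
    by (rule tendsto_vec_lambda)
  thus ?thesis unfolding Psi_def .
qed

lemma Psi_exp_sums: "(\<lambda>k. (1 / fact k) *\<^sub>R matpow M k) sums Psi (exp (Phi M))"
proof -
  have "(\<lambda>N. \<Sum>k<N. Phi M ^ k /\<^sub>R fact k) \<longlonglongrightarrow> exp (Phi M)"
    using exp_converges[of "Phi M"] unfolding sums_def .
  hence 1: "(\<lambda>N. Psi (\<Sum>k<N. Phi M ^ k /\<^sub>R fact k)) \<longlonglongrightarrow> Psi (exp (Phi M))"
    by (rule Psi_tendsto)
  have "Phi M ^ k /\<^sub>R fact k = Phi ((1 / fact k) *\<^sub>R matpow M k)" for k
    by (simp only: Phi_scaleR Phi_matpow inverse_eq_divide)
  hence "(\<Sum>k<N. Phi M ^ k /\<^sub>R fact k) = Phi (\<Sum>k<N. (1 / fact k) *\<^sub>R matpow M k)" for N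
    by (simp only: Phi_sum)
  hence "Psi (\<Sum>k<N. Phi M ^ k /\<^sub>R fact k) = (\<Sum>k<N. (1 / fact k) *\<^sub>R matpow M k)" for N
    by (simp only: Psi_Phi)
  with 1 show ?thesis unfolding sums_def by (simp only:)
qed

lemma mexp_sums: "(\<lambda>k. (1 / fact k) *\<^sub>R matpow M k) sums mexp M"
proof -
  have "Psi (exp (Phi M)) = mexp M" unfolding mexp_def by (rule sums_unique[OF Psi_exp_sums])
  with Psi_exp_sums[of M] show ?thesis by simp
qed

lemma mexp_apply: "mexp M *v v = blinfun_apply (rep_ce (exp (Phi M))) v"
proof -
  have 1: "(\<lambda>k. ((1 / fact k) *\<^sub>R matpow M k) *v v) sums (mexp M *v v)"
    by (rule bounded_linear.sums[OF mv_bl mexp_sums])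
  have 2: "(\<lambda>k. blinfun_apply (rep_ce (Phi M ^ k /\<^sub>R fact k)) v) sums blinfun_apply (rep_ce (exp (Phi M))) v"
    by (rule bounded_linear.sums[OF rep_ce_apply_bl exp_converges])
  have "blinfun_apply (rep_ce (Phi M ^ k /\<^sub>R fact k)) v = ((1 / fact k) *\<^sub>R matpow M k) *v v" for k
  proof -
    have "Phi M ^ k /\<^sub>R fact k = Phi ((1 / fact k) *\<^sub>R matpow M k)"
      by (simp add: Phi_scaleR Phi_matpow inverse_eq_divide)
    thus ?thesis by simp
  qed
  with 2 have "(\<lambda>k. ((1 / fact k) *\<^sub>R matpow M k) *v v) sums blinfun_apply (rep_ce (exp (Phi M))) v" by simp
  with 1 show ?thesis using sums_unique2 by blast
qed

lemma Phi_mexp: "Phi (mexp M) = exp (Phi M)"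
  by (rule ce_eqI) (simp add: mexp_apply)

lemma mexp_add: assumes c: "X ** Y = Y ** X" shows "mexp (X + Y) = mexp X ** mexp Y"
proof (rule Phi_inj)
  have "Phi X * Phi Y = Phi Y * Phi X" by (metis Phi_mult c)
  thus "Phi (mexp (X + Y)) = Phi (mexp X ** mexp Y)"
    by (simp add: Phi_mexp Phi_add Phi_mult exp_add_commuting)
qed




lemma mat_left: "mat a ** X = ((\<chi> i j. a * X$i$j) :: complex^'n::finite^'n)"
  unfolding matrix_matrix_mult_def mat_def by (simp add: vec_eq_iff if_distrib if_distribR sum.delta cong: if_cong)
lemma mat_right: "X ** mat a = ((\<chi> i j. X$i$j * a) :: complex^'n::finite^'n)"
  unfolding matrix_matrix_mult_def mat_def by (simp add: vec_eq_iff if_distrib if_distribR sum.delta' cong: if_cong)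
lemma mat_mult: "mat a ** mat b = (mat (a * b) :: complex^'n::finite^'n)"
  by (simp add: mat_left) (simp add: mat_def vec_eq_iff)
lemma mat_comm: "mat z ** (X::complex^'n::finite^'n) = X ** mat z"
  unfolding mat_left mat_right by (simp add: mult.commute)
lemma mat_mv: "(mat z :: complex^'n::finite^'n) *v v = z *s v"
  unfolding matrix_vector_mult_def mat_def by (simp add: vec_eq_iff if_distrib if_distribR sum.delta cong: if_cong)

lemma matpow_mat: "matpow (mat z) k = (mat (z ^ k) :: complex^'n::finite^'n)"
  by (induct k) (simp_all add: matpow_def mat_mult)

lemma mat_bl: "bounded_linear (mat :: complex \<Rightarrow> complex^'n::finite^'n)"
  by (simp add: linear_conv_bounded_linear[symmetric] linear_iff vec_eq_iff mat_def)

lemma mexp_mat: "mexp (mat z) = (mat (exp z) :: complex^'n::finite^'n)"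
proof -
  have "(\<lambda>k. mat (z^k /\<^sub>R fact k)) sums (mat (exp z) :: complex^'n^'n)"
    by (rule bounded_linear.sums[OF mat_bl exp_converges])
  moreover have "mat (z^k /\<^sub>R fact k) = (1/fact k) *\<^sub>R (matpow (mat z) k :: complex^'n^'n)" for k :: nat
    unfolding matpow_mat by (simp add: vec_eq_iff mat_def inverse_eq_divide)
  ultimately have "(\<lambda>k. (1/fact k) *\<^sub>R matpow (mat z) k) sums (mat (exp z) :: complex^'n^'n)"
    by simp
  thus ?thesis using mexp_sums sums_unique2 by blast
qed

lemma mexp_zero: "mexp 0 = (mat 1 :: complex^'n::finite^'n)"
  by (rule Phi_inj) (simp add: Phi_mexp Phi_zero Phi_one)

lemma mexp_scale_add: "mexp ((s + t) *\<^sub>R X) = mexp (s *\<^sub>R X) ** mexp (t *\<^sub>R (X :: complex^'n::finite^'n))"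
proof -
  have "(s *\<^sub>R X) ** (t *\<^sub>R X) = (t *\<^sub>R X) ** (s *\<^sub>R X)"
    by (simp add: scalar_matrix_assoc[symmetric] matrix_scalar_ac mult.commute)
  thus ?thesis by (simp add: scaleR_add_left mexp_add)
qed

lemma mexp_nat: "mexp (real j *\<^sub>R X) = matpow (mexp X) j" for X :: "complex^'n::finite^'n"
proof (induct j)
  case 0 thus ?case by (simp add: mexp_zero matpow_def)
next
  case (Suc j)
  have "mexp (real (Suc j) *\<^sub>R X) = mexp ((1 + real j) *\<^sub>R X)" by simp
  also have "\<dots> = mexp X ** mexp (real j *\<^sub>R X)" by (simp only: mexp_scale_add scaleR_one)
  finally show ?case using Suc by (simp add: matpow_def)
qed

lemma mexp_shift: "mexp (r *\<^sub>R (A - mat c)) = mat (exp (- (of_real r * c))) ** mexp (r *\<^sub>R A)"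
  for A :: "complex^'n::finite^'n"
proof -
  have 1: "r *\<^sub>R mat c = (mat (of_real r * c) :: complex^'n^'n)"
    unfolding mat_def by (simp add: vec_eq_iff of_real_def)
  have "r *\<^sub>R (A - mat c) = r *\<^sub>R A - mat (of_real r * c)" by (simp add: scaleR_diff_right 1)
  also have "\<dots> = mat (- (of_real r * c)) + r *\<^sub>R A" unfolding mat_def by (simp add: vec_eq_iff)
  finally have "r *\<^sub>R (A - mat c) = mat (- (of_real r * c)) + r *\<^sub>R A" .
  thus ?thesis by (simp add: mexp_add mat_comm mexp_mat)
qed




lemma bb_ce: "bounded_bilinear (\<lambda>(F::'n::finite cendo) v. blinfun_apply (rep_ce F) v)"
  by (rule bounded_bilinear.comp1[OF bounded_bilinear_blinfun_apply rep_ce_bl])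

lemma smul_bl: "bounded_linear (\<lambda>z::complex. z *s (r::complex^'n::finite))"
  by (simp add: linear_conv_bounded_linear[symmetric] linear_iff vec_eq_iff distrib_right)

lemma deriv_h:
  fixes A :: "complex^'n::finite^'n" and r gh :: "complex^'n" and c :: complex
  assumes rg: "(mat c - A) *v r = gh"
  shows "((\<lambda>s. mexp ((t - s) *\<^sub>R A) *v (exp (c * of_real s) *s r)) has_vector_derivative
          (mexp ((t - s) *\<^sub>R A) *v (exp (c * of_real s) *s gh))) (at s within S)"
proof -
  let ?L = "Phi A"
  let ?E = "exp ((t - s) *\<^sub>R ?L)"
  let ?e = "exp (c * of_real s)"
  have e: "mexp ((t - u) *\<^sub>R A) *v w = blinfun_apply (rep_ce (exp ((t - u) *\<^sub>R ?L))) w" for u w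
    by (simp add: mexp_apply Phi_scaleR)
  have df: "((\<lambda>u. t - u) has_vector_derivative (0 - 1)) (at s)"
    by (intro has_vector_derivative_diff has_vector_derivative_const has_vector_derivative_id)
  have ch: "((\<lambda>u. exp (u *\<^sub>R ?L)) \<circ> (\<lambda>u. t - u) has_vector_derivative ((0 - 1) *\<^sub>R (exp ((t - s) *\<^sub>R ?L) * ?L))) (at s)"
    by (rule vector_diff_chain_at[OF df exp_scaleR_has_vector_derivative_right])
  have m: "(0 - 1::real) *\<^sub>R X = - X" for X :: "'n cendo" by simp
  have "((\<lambda>u. exp ((t - u) *\<^sub>R ?L)) has_vector_derivative (- (?E * ?L))) (at s)"
    using ch unfolding comp_def m .
  hence dE: "((\<lambda>u. exp ((t - u) *\<^sub>R ?L)) has_vector_derivative (- (?E * ?L))) (at s within S)"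
    by (rule has_vector_derivative_at_within)
  have dx: "((\<lambda>u. exp (c * of_real u)) has_vector_derivative (?e * c)) (at s within S)"
  proof -
    have "((\<lambda>z. exp (c * z)) has_field_derivative (?e * c)) (at (of_real s))"
      by (auto intro!: derivative_eq_intros)
    thus ?thesis by (rule has_vector_derivative_real_field)
  qed
  have dp: "((\<lambda>u. exp (c * of_real u) *s r) has_vector_derivative ((?e * c) *s r)) (at s within S)"
    by (rule bounded_linear.has_vector_derivative[OF smul_bl dx])
  have dh: "((\<lambda>u. blinfun_apply (rep_ce (exp ((t - u) *\<^sub>R ?L))) (exp (c * of_real u) *s r)) has_vector_derivative
     (blinfun_apply (rep_ce ?E) ((?e * c) *s r) + blinfun_apply (rep_ce (- (?E * ?L))) (?e *s r))) (at s within S)"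
    by (rule bounded_bilinear.has_vector_derivative[OF bb_ce dE dp])
  have vec: "(?e * c) *s r - A *v (?e *s r) = ?e *s gh"
  proof -
    have 1: "A *v (?e *s r) = ?e *s (A *v r)" by (rule vector_scalar_commute)
    have 2: "gh = c *s r - A *v r" using rg by (simp add: matrix_vector_mult_diff_rdistrib mat_mv)
    show ?thesis unfolding 1 2 by (simp add: vec_eq_iff algebra_simps)
  qed
  have "blinfun_apply (rep_ce ?E) (?e *s gh) = blinfun_apply (rep_ce ?E) ((?e * c) *s r) - blinfun_apply (rep_ce ?E) (A *v (?e *s r))"
    by (simp add: vec[symmetric] blinfun.diff_right)
  also have "\<dots> = blinfun_apply (rep_ce ?E) ((?e * c) *s r) + blinfun_apply (rep_ce (- (?E * ?L))) (?e *s r)"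
    by (simp add: uminus_cendo.rep_eq times_cendo.rep_eq blinfun.minus_left)
  finally have eq: "blinfun_apply (rep_ce ?E) ((?e * c) *s r) + blinfun_apply (rep_ce (- (?E * ?L))) (?e *s r) = blinfun_apply (rep_ce ?E) (?e *s gh)" by simp
  show ?thesis unfolding e using dh unfolding eq .
qed

lemma int_term:
  fixes A :: "complex^'n::finite^'n" and r gh :: "complex^'n" and c :: complex
  assumes rg: "(mat c - A) *v r = gh" and t: "0 \<le> t"
  shows "((\<lambda>s. mexp ((t - s) *\<^sub>R A) *v (exp (c * of_real s) *s gh)) has_integral
           (exp (c * of_real t) *s r - mexp (t *\<^sub>R A) *v r)) {0..t}"
proof -
  have "((\<lambda>s. mexp ((t - s) *\<^sub>R A) *v (exp (c * of_real s) *s gh)) has_integral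
    ((\<lambda>s. mexp ((t - s) *\<^sub>R A) *v (exp (c * of_real s) *s r)) t - (\<lambda>s. mexp ((t - s) *\<^sub>R A) *v (exp (c * of_real s) *s r)) 0)) {0..t}"
    by (rule fundamental_theorem_of_calculus[OF t deriv_h[OF rg]])
  thus ?thesis by (simp add: mexp_zero)
qed




lemma mv_scaleR_right: "(X::complex^'n::finite^'m::finite) *v (a *\<^sub>R v) = a *\<^sub>R (X *v v)"
  by (simp add: vec_eq_iff matrix_vector_mult_def scaleR_sum_right)

lemma mv_sum: "(X::complex^'n::finite^'m::finite) *v (\<Sum>i\<in>S. f i) = (\<Sum>i\<in>S. X *v f i)"
  by (induct S rule: infinite_finite_induct) (simp_all add: matrix_vector_right_distrib)

lemma sum_smult: "(\<Sum>i\<in>S. f i) *s (v::complex^'n::finite) = (\<Sum>i\<in>S. f i *s v)"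
  by (induct S rule: infinite_finite_induct) (simp_all add: vec_eq_iff distrib_right)

lemma minv: "invertible M \<Longrightarrow> M ** matrix_inv M = mat 1 \<and> matrix_inv M ** M = mat 1"
  unfolding invertible_def matrix_inv_def by (rule someI_ex)

lemma rou_sum:
  fixes N :: nat and d :: int
  assumes N: "N \<ge> 1"
  shows "(\<Sum>j<N. exp (of_nat j * (2 * pi * \<i> * of_int d / of_nat N))) =
         (if int N dvd d then (of_nat N :: complex) else 0)"
proof -
  define x where "x = exp (2 * pi * \<i> * of_int d / of_nat N)"
  have t: "exp (of_nat j * (2 * pi * \<i> * of_int d / of_nat N)) = x ^ j" for j
    unfolding x_def by (rule exp_of_nat_mult)
  have xN: "x ^ N = 1"
  proof -
    have "x ^ N = exp (of_nat N * (2 * pi * \<i> * of_int d / of_nat N))" unfolding x_def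
      by (rule exp_of_nat_mult[symmetric])
    also have "\<dots> = exp (2 * pi * \<i> * of_int d)" using N by simp
    also have "\<dots> = 1" unfolding exp_eq_1 by simp
    finally show ?thesis .
  qed
  show ?thesis
  proof (cases "int N dvd d")
    case True
    then obtain m where m: "d = int N * m" by blast
    have "x = exp (2 * pi * \<i> * of_int m)" unfolding x_def m using N by (simp add: mult_ac)
    also have "\<dots> = 1" unfolding exp_eq_1 by simp
    finally have x1: "x = 1" .
    show ?thesis unfolding t using True x1 by simp
  next
    case False
    have "x \<noteq> 1"
    proof
      assume "x = 1"
      then obtain n :: int where n: "Im (2 * pi * \<i> * of_int d / of_nat N) = of_int (2 * n) * pi"
        unfolding x_def exp_eq_1 by blast
      hence "2 * pi * d / N = 2 * n * pi" by simp
      hence "real_of_int d = real N * n" using N by (simp add: field_simps)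
      hence "d = int N * n" by (metis of_int_eq_iff of_int_mult of_int_of_nat_eq)
      thus False using False by simp
    qed
    thus ?thesis unfolding t using False by (simp add: sum_gp_strict xN)
  qed
qed


lemma smult_scaleR: "e *s (a *\<^sub>R v) = a *\<^sub>R (e *s (v::complex^'n::finite))"
  by (simp add: vec_eq_iff)

lemma smult_sum: "e *s (\<Sum>i\<in>S. f i) = (\<Sum>i\<in>S. e *s (f i::complex^'n::finite))"
  by (induct S rule: infinite_finite_induct) (simp_all add: vec_eq_iff distrib_left)

lemma smult_assoc: "e *s (x *s (v::complex^'n::finite)) = (e * x) *s v"
  by (simp add: vec_eq_iff mult.assoc)

lemma smult_add: "e *s (a + b) = e *s a + e *s (b::complex^'n::finite)"
  by (simp add: vec_eq_iff distrib_left)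

lemma dvd_less_eq: "l < N \<Longrightarrow> k < N \<Longrightarrow> int N dvd (int l - int k) \<Longrightarrow> l = k"
  by (metis mod_eq_dvd_iff of_nat_eq_iff of_nat_mod mod_less)




theorem mainTheorem1:
  fixes Nw :: nat and dt T :: real
    and A :: "complex^'n^'n" and q0 :: "complex^'n"
    and ghat :: "nat \<Rightarrow> complex^'n"
    and g q :: "real \<Rightarrow> complex^'n"
    and R :: "nat \<Rightarrow> complex^'n^'n"
    and k :: nat
  assumes hN: "Nw \<ge> 1"
    and hdt: "dt > 0"
    and hT: "T = real Nw * dt"
    and hg: "\<And>t. g t = (1 / real Nw) *\<^sub>R
                 (\<Sum>l<Nw. exp (\<i> * complex_of_real (omega Nw T l * t)) *s ghat l)"
    and hq: "\<And>t. t \<in> {0..T} \<Longrightarrow>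
               q t = mexp (t *\<^sub>R A) *v q0
                     + integral {0..t} (\<lambda>s. mexp ((t - s) *\<^sub>R A) *v g s)"
    and hinv: "\<And>l. l < Nw \<Longrightarrow> invertible (mat (\<i> * complex_of_real (omega Nw T l)) - A)"
    and hR: "\<And>l. l < Nw \<Longrightarrow> R l = matrix_inv (mat (\<i> * complex_of_real (omega Nw T l)) - A)"
    and hk: "k < Nw"
    and hinvk: "invertible (mat 1 - mexp (dt *\<^sub>R (A - mat (\<i> * complex_of_real (omega Nw T k)))))"
  shows "(\<Sum>j<Nw. exp (- \<i> * complex_of_real (omega Nw T k * (real j * dt))) *s q (real j * dt))
         = R k *v ghat k
           + matrix_inv (mat 1 - mexp (dt *\<^sub>R (A - mat (\<i> * complex_of_real (omega Nw T k)))))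
             *v ((mat 1 - mexp (T *\<^sub>R A))
                 *v (q0 - (1 / real Nw) *\<^sub>R (\<Sum>l<Nw. R l *v ghat l)))"
proof -
  define c where "c l = \<i> * complex_of_real (omega Nw T l)" for l
  define r where "r l = R l *v ghat l" for l
  define m where "m l = int l - int Nw * (if real l - real Nw / 2 < 0 then 0 else 1)" for l
  define wv where "wv = q0 - (1 / real Nw) *\<^sub>R (\<Sum>l<Nw. r l)"
  define e where "e j = exp (- \<i> * complex_of_real (omega Nw T k * (real j * dt)))" for j
  define F where "F = mexp (dt *\<^sub>R (A - mat (\<i> * complex_of_real (omega Nw T k))))"
  have Npos: "real Nw > 0" using hN by simp
  have Tpos: "T > 0" using hT hdt Npos by simp
  have om: "omega Nw T l = 2 * pi * of_int (m l) / T" for l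
    unfolding omega_def Theta_def m_def by simp
  have rg: "(mat (c l) - A) *v r l = ghat l" if "l < Nw" for l
  proof -
    have "(mat (c l) - A) ** R l = mat 1" using minv[OF hinv[OF that]] hR[OF that] c_def by simp
    thus ?thesis unfolding r_def by (simp add: matrix_vector_mul_assoc)
  qed
  have qt: "q t = mexp (t *\<^sub>R A) *v q0 + (1 / real Nw) *\<^sub>R
      (\<Sum>l<Nw. exp (c l * of_real t) *s r l - mexp (t *\<^sub>R A) *v r l)"
    if t: "t \<in> {0..T}" for t
  proof -
    have t0: "0 \<le> t" using t by simp
    have ig: "mexp ((t - s) *\<^sub>R A) *v g s = (1 / real Nw) *\<^sub>R
       (\<Sum>l<Nw. mexp ((t - s) *\<^sub>R A) *v (exp (c l * of_real s) *s ghat l))" for s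
    proof -
      have "exp (\<i> * complex_of_real (omega Nw T l * s)) = exp (c l * of_real s)" for l
        by (simp add: c_def mult.assoc)
      thus ?thesis by (simp add: hg mv_scaleR_right mv_sum)
    qed
    have "((\<lambda>s. \<Sum>l<Nw. mexp ((t - s) *\<^sub>R A) *v (exp (c l * of_real s) *s ghat l)) has_integral
           (\<Sum>l<Nw. exp (c l * of_real t) *s r l - mexp (t *\<^sub>R A) *v r l)) {0..t}"
      by (rule has_integral_sum) (auto intro!: int_term rg t0)
    hence "((\<lambda>s. mexp ((t - s) *\<^sub>R A) *v g s) has_integral (1 / real Nw) *\<^sub>R
      (\<Sum>l<Nw. exp (c l * of_real t) *s r l - mexp (t *\<^sub>R A) *v r l)) {0..t}"
      unfolding ig by (rule has_integral_cmul)
    hence "integral {0..t} (\<lambda>s. mexp ((t - s) *\<^sub>R A) *v g s) = (1 / real Nw) *\<^sub>R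
      (\<Sum>l<Nw. exp (c l * of_real t) *s r l - mexp (t *\<^sub>R A) *v r l)" by (rule integral_unique)
    thus ?thesis using hq[OF t] by simp
  qed
  have qj: "q (real j * dt) = mexp ((real j * dt) *\<^sub>R A) *v wv + (1 / real Nw) *\<^sub>R
      (\<Sum>l<Nw. exp (c l * of_real (real j * dt)) *s r l)" if j: "j < Nw" for j
  proof -
    have "real j * dt \<le> real Nw * dt" using j hdt by simp
    hence "real j * dt \<in> {0..T}" using hdt hT by simp
    from qt[OF this] show ?thesis unfolding wv_def
      by (simp add: sum_subtractf mv_sum[symmetric] matrix_vector_mult_diff_distrib mv_scaleR_right
          scaleR_diff_right algebra_simps)
  qed
  have mk: "omega Nw T l * T = 2 * pi * of_int (m l)" for l using Tpos by (simp add: om)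
  have inner: "(\<Sum>j<Nw. e j * exp (c l * of_real (real j * dt))) = (if l = k then of_nat Nw else 0)"
    if l: "l < Nw" for l
  proof -
    have "e j * exp (c l * of_real (real j * dt)) =
          exp (of_nat j * (2 * pi * \<i> * of_int (m l - m k) / of_nat Nw))" for j
    proof -
      have rho: "(omega Nw T l - omega Nw T k) * (real j * dt) = real j * (2 * pi * of_int (m l - m k) / real Nw)"
        unfolding om unfolding hT using hdt Npos by (simp add: field_simps)
      have "e j * exp (c l * of_real (real j * dt)) = exp (\<i> * of_real ((omega Nw T l - omega Nw T k) * (real j * dt)))"
        unfolding e_def c_def by (simp add: exp_add[symmetric] algebra_simps)
      also have "\<dots> = exp (of_nat j * (2 * pi * \<i> * of_int (m l - m k) / of_nat Nw))"
        unfolding rho by (simp add: mult_ac)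
      finally show ?thesis .
    qed
    hence "(\<Sum>j<Nw. e j * exp (c l * of_real (real j * dt))) =
        (\<Sum>j<Nw. exp (of_nat j * (2 * pi * \<i> * of_int (m l - m k) / of_nat Nw)))" by simp
    also have "\<dots> = (if int Nw dvd (m l - m k) then of_nat Nw else 0)" by (rule rou_sum[OF hN])
    also have "int Nw dvd (m l - m k) \<longleftrightarrow> l = k"
    proof
      assume "int Nw dvd (m l - m k)"
      moreover have "m l - m k = (int l - int k) + int Nw * ((if real k - real Nw / 2 < 0 then 0 else 1) - (if real l - real Nw / 2 < 0 then 0 else 1))"
        unfolding m_def by (simp add: algebra_simps)
      ultimately have "int Nw dvd (int l - int k)"
        by (metis dvd_add_left_iff dvd_triv_left)
      thus "l = k" using dvd_less_eq l hk by blast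
    qed simp
    finally show ?thesis .
  qed
  have part2: "(\<Sum>l<Nw. (\<Sum>j<Nw. e j * exp (c l * of_real (real j * dt))) *s r l) = of_nat Nw *s r k"
  proof -
    have "(\<Sum>l<Nw. (\<Sum>j<Nw. e j * exp (c l * of_real (real j * dt))) *s r l) =
          (\<Sum>l<Nw. (if l = k then of_nat Nw else 0) *s r l)"
    proof (rule sum.cong[OF refl])
      fix l assume "l \<in> {..<Nw}"
      hence "l < Nw" by simp
      from inner[OF this] show "(\<Sum>j<Nw. e j * exp (c l * of_real (real j * dt))) *s r l = (if l = k then of_nat Nw else 0) *s r l"
        by (rule arg_cong[where f="\<lambda>x. x *s r l"])
    qed
    also have "\<dots> = of_nat Nw *s r k"
      using hk by (simp add: if_distrib[of "\<lambda>x. x *s _"] sum.delta' cong: if_cong)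
    finally show ?thesis .
  qed
  have Fj: "matpow F j *v wv = e j *s (mexp ((real j * dt) *\<^sub>R A) *v wv)" for j
  proof -
    have "matpow F j = mexp ((real j * dt) *\<^sub>R (A - mat (\<i> * complex_of_real (omega Nw T k))))"
      unfolding F_def mexp_nat[symmetric] by simp
    also have "\<dots> = mat (e j) ** mexp ((real j * dt) *\<^sub>R A)"
      unfolding mexp_shift e_def by (simp add: mult_ac)
    finally show ?thesis by (simp add: matrix_vector_mul_assoc[symmetric] mat_mv)
  qed
  have FN: "matpow F Nw = mexp (T *\<^sub>R A)"
  proof -
    have "matpow F Nw = mexp (T *\<^sub>R (A - mat (\<i> * complex_of_real (omega Nw T k))))"
      unfolding F_def mexp_nat[symmetric] by (simp add: hT)
    also have "\<dots> = mat (exp (- (of_real T * (\<i> * complex_of_real (omega Nw T k))))) ** mexp (T *\<^sub>R A)"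
      by (rule mexp_shift)
    also have "exp (- (of_real T * (\<i> * complex_of_real (omega Nw T k)))) = 1"
    proof -
      have "Im (- (of_real T * (\<i> * complex_of_real (omega Nw T k)))) = of_int (2 * (- m k)) * pi"
        using mk[of k] by (simp add: mult.commute)
      thus ?thesis unfolding exp_eq_1 by (intro conjI exI[of _ "- m k"]) simp_all
    qed
    finally show ?thesis by simp
  qed
  define Sa where "Sa = (\<Sum>j<Nw. matpow F j *v wv)"
  have tel: "(mat 1 - F) *v Sa = (mat 1 - mexp (T *\<^sub>R A)) *v wv"
  proof -
    have "(mat 1 - F) *v Sa = (\<Sum>j<Nw. matpow F j *v wv - matpow F (Suc j) *v wv)"
      unfolding Sa_def mv_sum
      by (rule sum.cong) (simp_all add: matrix_vector_mult_diff_rdistrib matrix_vector_mul_assoc[symmetric] matpow_def)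
    also have "\<dots> = matpow F 0 *v wv - matpow F Nw *v wv" by (rule sum_lessThan_telescope')
    also have "\<dots> = (mat 1 - mexp (T *\<^sub>R A)) *v wv"
      unfolding FN by (simp add: matpow_def matrix_vector_mult_diff_rdistrib)
    finally show ?thesis .
  qed
  have part1: "matrix_inv (mat 1 - F) *v ((mat 1 - mexp (T *\<^sub>R A)) *v wv) = Sa"
    unfolding tel[symmetric] using minv[OF hinvk[folded F_def]]
    by (simp add: matrix_vector_mul_assoc)
  have "(\<Sum>j<Nw. e j *s q (real j * dt)) =
        (\<Sum>j<Nw. e j *s (mexp ((real j * dt) *\<^sub>R A) *v wv) + (1 / real Nw) *\<^sub>R
          (\<Sum>l<Nw. (e j * exp (c l * of_real (real j * dt))) *s r l))"
    by (rule sum.cong) (simp_all add: qj smult_add smult_scaleR smult_sum smult_assoc)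
  also have "\<dots> = (\<Sum>j<Nw. e j *s (mexp ((real j * dt) *\<^sub>R A) *v wv)) + (1 / real Nw) *\<^sub>R
          (\<Sum>j<Nw. \<Sum>l<Nw. (e j * exp (c l * of_real (real j * dt))) *s r l)"
    by (simp only: sum.distrib scaleR_sum_right)
  also have "(\<Sum>j<Nw. \<Sum>l<Nw. (e j * exp (c l * of_real (real j * dt))) *s r l) =
             (\<Sum>l<Nw. \<Sum>j<Nw. (e j * exp (c l * of_real (real j * dt))) *s r l)"
    by (rule sum.swap)
  also have "(\<Sum>l<Nw. \<Sum>j<Nw. (e j * exp (c l * of_real (real j * dt))) *s r l) =
             (\<Sum>l<Nw. (\<Sum>j<Nw. e j * exp (c l * of_real (real j * dt))) *s r l)"
    by (simp only: sum_smult)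
  also have "(\<Sum>j<Nw. e j *s (mexp ((real j * dt) *\<^sub>R A) *v wv)) = Sa"
    unfolding Sa_def Fj ..
  also have "Sa + (1 / real Nw) *\<^sub>R (\<Sum>l<Nw. (\<Sum>j<Nw. e j * exp (c l * of_real (real j * dt))) *s r l) = Sa + r k"
    unfolding part2 using Npos by (simp add: vec_eq_iff, simp add: scaleR_conv_of_real)
  finally have L: "(\<Sum>j<Nw. e j *s q (real j * dt)) = Sa + r k" .
  show ?thesis
    using L part1 unfolding e_def F_def wv_def r_def by (simp add: add.commute)
qed


end
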